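(* Let $d\ge3$ and let $X,Y\in M_d(\mathbb{C})$ be diagonal matrices such that the pair $(X,Y)$ is generic. Then the matrix $H(X,Y)$ is positive definite, where $H(X,Y)$ is the hermitian matrix of order $2d^2$ given by $H=H_1-\tfrac12(H_2+H_3)+\tfrac14H_4$ with $$H_1=\begin{bmatrix}\|X\|^2&\operatorname{tr}(X^\dagger Y)\\ \operatorname{tr}(Y^\dagger X)&\|Y\|^2\end{bmatrix}\otimes I_{d^2},\qquad H_2=\begin{bmatrix}X^\dagger X&X^\dagger Y\\ Y^\dagger X&Y^\dagger Y\end{bmatrix}\otimes I_d,$$ $$H_3=\begin{bmatrix}I_d\otimes X^*X^T&I_d\otimes X^*Y^T\\ I_d\otimes Y^*X^T&I_d\otimes Y^*Y^T\end{bmatrix},\qquad H_4=\begin{bmatrix}\tilde X^*\tilde X^T&\tilde X^*\tilde Y^T\\ \tilde Y^*\tilde X^T&\tilde Y^*\tilde Y^T\end{bmatrix}.$$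
   Context: A pair $(X,Y)$ of matrices in $M_d(\mathbb{C})$ is generic if $X$ and $Y$ are linearly independent and some linear combination of $X$ and $Y$ is nonsingular. $Z^*$ is the entrywise complex conjugate, $Z^T$ the transpose, $Z^\dagger$ the conjugate transpose, $\|Z\|^2=\operatorname{tr}(Z^\dagger Z)$, $I_m$ the identity matrix of order $m$, and $A\otimes B=[a_{ij}B]$ for $A=[a_{ij}]$. For a matrix $Z$, $\tilde Z$ is the column vector obtained by stacking the columns of $Z$ one below the other, starting with the first. *)

theory Defs
  imports "Jordan_Normal_Form.Determinant"
begin

definition adj_mat :: "complex mat \<Rightarrow> complex mat" where
  "adj_mat Z = transpose_mat (map_mat cnj Z)"

definition conj_mat :: "complex mat \<Rightarrow> complex mat" where
  "conj_mat Z = map_mat cnj Z"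

definition mtrace :: "complex mat \<Rightarrow> complex" where
  "mtrace A = (\<Sum>i<dim_row A. A $$ (i,i))"

definition fro_norm_sq :: "complex mat \<Rightarrow> complex" where
  "fro_norm_sq Z = mtrace (adj_mat Z * Z)"

definition kron :: "complex mat \<Rightarrow> complex mat \<Rightarrow> complex mat" where
  "kron A B = mat (dim_row A * dim_row B) (dim_col A * dim_col B)
     (\<lambda>(i,j). A $$ (i div dim_row B, j div dim_col B) * B $$ (i mod dim_row B, j mod dim_col B))"

(* \<tilde>Z : stack the columns of Z, starting with the first, as a column vector (matrix with one column) *)
definition vec_stack :: "complex mat \<Rightarrow> complex mat" where
  "vec_stack Z = mat (dim_row Z * dim_col Z) 1 (\<lambda>(k,_). Z $$ (k mod dim_row Z, k div dim_row Z))"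

definition generic_pair :: "nat \<Rightarrow> complex mat \<Rightarrow> complex mat \<Rightarrow> bool" where
  "generic_pair d X Y \<longleftrightarrow>
     (\<forall>a b. a \<cdot>\<^sub>m X + b \<cdot>\<^sub>m Y = 0\<^sub>m d d \<longrightarrow> a = 0 \<and> b = 0) \<and>
     (\<exists>a b. det (a \<cdot>\<^sub>m X + b \<cdot>\<^sub>m Y) \<noteq> 0)"

definition H1 :: "nat \<Rightarrow> complex mat \<Rightarrow> complex mat \<Rightarrow> complex mat" where
  "H1 d X Y = kron (mat_of_rows_list 2
      [[fro_norm_sq X, mtrace (adj_mat X * Y)],
       [mtrace (adj_mat Y * X), fro_norm_sq Y]]) (1\<^sub>m (d^2))"

definition H2 :: "nat \<Rightarrow> complex mat \<Rightarrow> complex mat \<Rightarrow> complex mat" where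
  "H2 d X Y = kron (four_block_mat (adj_mat X * X) (adj_mat X * Y)
                                   (adj_mat Y * X) (adj_mat Y * Y)) (1\<^sub>m d)"

definition H3 :: "nat \<Rightarrow> complex mat \<Rightarrow> complex mat \<Rightarrow> complex mat" where
  "H3 d X Y = four_block_mat
      (kron (1\<^sub>m d) (conj_mat X * transpose_mat X)) (kron (1\<^sub>m d) (conj_mat X * transpose_mat Y))
      (kron (1\<^sub>m d) (conj_mat Y * transpose_mat X)) (kron (1\<^sub>m d) (conj_mat Y * transpose_mat Y))"

definition H4 :: "complex mat \<Rightarrow> complex mat \<Rightarrow> complex mat" where
  "H4 X Y = four_block_mat
      (conj_mat (vec_stack X) * transpose_mat (vec_stack X)) (conj_mat (vec_stack X) * transpose_mat (vec_stack Y))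
      (conj_mat (vec_stack Y) * transpose_mat (vec_stack X)) (conj_mat (vec_stack Y) * transpose_mat (vec_stack Y))"

definition Hmat :: "nat \<Rightarrow> complex mat \<Rightarrow> complex mat \<Rightarrow> complex mat" where
  "Hmat d X Y = H1 d X Y - (1/2) \<cdot>\<^sub>m (H2 d X Y + H3 d X Y) + (1/4) \<cdot>\<^sub>m H4 X Y"

definition pos_def_mat :: "nat \<Rightarrow> complex mat \<Rightarrow> bool" where
  "pos_def_mat n H \<longleftrightarrow> H \<in> carrier_mat n n \<and> adj_mat H = H \<and>
     (\<forall>v \<in> carrier_vec n. v \<noteq> 0\<^sub>v n \<longrightarrow> Re (conjugate v \<bullet> (H *\<^sub>v v)) > 0)"

end

theory Submission
  imports Defs
begin


lemma diag_mult_idx: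
  assumes A: "A \<in> carrier_mat d d" and B: "B \<in> carrier_mat d d"
    and dA: "diagonal_mat A" and dB: "diagonal_mat B" and i: "i < d" and j: "j < d"
  shows "(A * B) $$ (i,j) = (if i = j then A $$ (i,i) * B $$ (i,i) else 0)"
proof -
  have "(A * B) $$ (i,j) = (\<Sum>k<d. A $$ (i,k) * B $$ (k,j))"
    using A B i j by (simp add: scalar_prod_def lessThan_atLeast0)
  also have "\<dots> = (\<Sum>k<d. if k = i then A $$ (i,i) * B $$ (i,j) else 0)"
    apply (rule sum.cong, simp)
    using dA A i unfolding diagonal_mat_def by auto
  also have "\<dots> = A $$ (i,i) * B $$ (i,j)" using i by simp
  finally show ?thesis using dB B i j unfolding diagonal_mat_def by auto
qed

lemma diag_adj: "A \<in> carrier_mat d d \<Longrightarrow> diagonal_mat A \<Longrightarrow> diagonal_mat (adj_mat A)"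
  unfolding diagonal_mat_def adj_mat_def by auto
lemma diag_conj: "A \<in> carrier_mat d d \<Longrightarrow> diagonal_mat A \<Longrightarrow> diagonal_mat (conj_mat A)"
  unfolding diagonal_mat_def conj_mat_def by auto
lemma diag_tr: "A \<in> carrier_mat d d \<Longrightarrow> diagonal_mat A \<Longrightarrow> diagonal_mat (transpose_mat A)"
  unfolding diagonal_mat_def by auto
lemma adj_carr: "A \<in> carrier_mat d d \<Longrightarrow> adj_mat A \<in> carrier_mat d d"
  unfolding adj_mat_def by auto
lemma conj_carr: "A \<in> carrier_mat d d \<Longrightarrow> conj_mat A \<in> carrier_mat d d"
  unfolding conj_mat_def by auto
lemma adj_idx: "A \<in> carrier_mat d d \<Longrightarrow> i < d \<Longrightarrow> j < d \<Longrightarrow> adj_mat A $$ (i,j) = cnj (A $$ (j,i))"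
  unfolding adj_mat_def by auto
lemma conj_idx: "A \<in> carrier_mat d d \<Longrightarrow> i < d \<Longrightarrow> j < d \<Longrightarrow> conj_mat A $$ (i,j) = cnj (A $$ (i,j))"
  unfolding conj_mat_def by auto

lemma adj_prod_idx:
  assumes "A \<in> carrier_mat d d" "B \<in> carrier_mat d d" "diagonal_mat A" "diagonal_mat B" "i < d" "j < d"
  shows "(adj_mat A * B) $$ (i,j) = (if i = j then cnj (A $$ (i,i)) * B $$ (i,i) else 0)"
  using diag_mult_idx[OF adj_carr[OF assms(1)] assms(2) diag_adj[OF assms(1,3)] assms(4-6)] assms
  by (simp add: adj_idx)

lemma conj_prod_idx:
  assumes "A \<in> carrier_mat d d" "B \<in> carrier_mat d d" "diagonal_mat A" "diagonal_mat B" "i < d" "j < d"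
  shows "(conj_mat A * transpose_mat B) $$ (i,j) = (if i = j then cnj (A $$ (i,i)) * B $$ (i,i) else 0)"
  using diag_mult_idx[OF conj_carr[OF assms(1)] _ diag_conj[OF assms(1,3)] diag_tr[OF assms(2,4)] assms(5-6)] assms
  by (simp add: conj_idx)

lemma four_block_idx:
  assumes "A \<in> carrier_mat n n" "B \<in> carrier_mat n n" "C \<in> carrier_mat n n" "D \<in> carrier_mat n n"
    "i < 2*n" "j < 2*n"
  shows "four_block_mat A B C D $$ (i,j) =
    (if i div n = 0 then (if j div n = 0 then A else B) else (if j div n = 0 then C else D)) $$ (i mod n, j mod n)"
proof -
  have n: "n > 0" using assms by auto
  show ?thesis using assms
    by (cases "i < n"; cases "j < n") (auto simp: div_eq_0_iff le_div_geq le_mod_geq)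
qed


definition gm :: "complex mat \<Rightarrow> complex mat \<Rightarrow> nat \<Rightarrow> complex mat" where
  "gm X Y s = (if s = 0 then X else Y)"
definition gg :: "complex mat \<Rightarrow> complex mat \<Rightarrow> nat \<Rightarrow> nat \<Rightarrow> complex" where
  "gg X Y s r = gm X Y s $$ (r,r)"
definition Gm :: "nat \<Rightarrow> complex mat \<Rightarrow> complex mat \<Rightarrow> nat \<Rightarrow> nat \<Rightarrow> complex" where
  "Gm d X Y s t = (\<Sum>r<d. cnj (gg X Y s r) * gg X Y t r)"
definition wv :: "nat \<Rightarrow> complex mat \<Rightarrow> complex mat \<Rightarrow> nat \<Rightarrow> nat \<Rightarrow> complex" where
  "wv d X Y s k = (if k mod d = k div d then gg X Y s (k div d) else 0)"

lemma mtrace_adj: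
  assumes "A \<in> carrier_mat d d" "B \<in> carrier_mat d d" "diagonal_mat A" "diagonal_mat B"
  shows "mtrace (adj_mat A * B) = (\<Sum>r<d. cnj (A $$ (r,r)) * B $$ (r,r))"
proof -
  have "dim_row (adj_mat A * B) = d" using adj_carr[OF assms(1)] by simp
  then show ?thesis unfolding mtrace_def
    by (intro sum.cong) (auto simp: adj_prod_idx[OF assms])
qed

lemma kron_idx: "i < dim_row A * dim_row B \<Longrightarrow> j < dim_col A * dim_col B \<Longrightarrow>
  kron A B $$ (i,j) = A $$ (i div dim_row B, j div dim_col B) * B $$ (i mod dim_row B, j mod dim_col B)"
  unfolding kron_def by simp

lemma kron_carr: "A \<in> carrier_mat a b \<Longrightarrow> B \<in> carrier_mat c e \<Longrightarrow> kron A B \<in> carrier_mat (a*c) (b*e)"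
  unfolding kron_def by auto

lemma two_cases: "(s::nat) < 2 \<Longrightarrow> s = 0 \<or> s = 1" by auto

context
  fixes d :: nat and X Y :: "complex mat"
  assumes X: "X \<in> carrier_mat d d" and Y: "Y \<in> carrier_mat d d"
    and dX: "diagonal_mat X" and dY: "diagonal_mat Y" and dpos: "d > 0"
begin

lemma gm_carr: "gm X Y s \<in> carrier_mat d d" using X Y by (simp add: gm_def)
lemma gm_diag: "diagonal_mat (gm X Y s)" using dX dY by (simp add: gm_def)

lemma Gm_eq: "Gm d X Y s t = mtrace (adj_mat (gm X Y s) * gm X Y t)"
  unfolding Gm_def gg_def using mtrace_adj[OF gm_carr gm_carr gm_diag gm_diag] by simp

lemma H1_idx:
  assumes i: "i < 2*d^2" and j: "j < 2*d^2"
  shows "H1 d X Y $$ (i,j) = (if i mod d^2 = j mod d^2 then Gm d X Y (i div d^2) (j div d^2) else 0)"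
proof -
  have si: "i div d^2 < 2" and sj: "j div d^2 < 2" using i j by (auto intro: less_mult_imp_div_less)
  have dd: "d^2 > 0" using dpos by simp
  have "H1 d X Y $$ (i,j) = [[fro_norm_sq X, mtrace (adj_mat X * Y)],
       [mtrace (adj_mat Y * X), fro_norm_sq Y]] ! (i div d^2) ! (j div d^2)
      * (if i mod d^2 = j mod d^2 then 1 else 0)"
    unfolding H1_def kron_def mat_of_rows_list_def using i j dd si sj by simp
  also have "\<dots> = (if i mod d^2 = j mod d^2 then Gm d X Y (i div d^2) (j div d^2) else 0)"
    using two_cases[OF si] two_cases[OF sj]
    by (auto simp: Gm_eq gm_def fro_norm_sq_def)
  finally show ?thesis .
qed


lemma am1: "(d::nat) > 0 \<Longrightarrow> i mod d^2 div d = i div d mod d"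
  by (simp add: power2_eq_square mod_mult2_eq)
lemma am2: "(d::nat) > 0 \<Longrightarrow> (i mod d^2 = j mod d^2) \<longleftrightarrow> (i div d mod d = j div d mod d \<and> i mod d = j mod d)"
proof
  assume "d > 0" "i mod d^2 = j mod d^2"
  then show "i div d mod d = j div d mod d \<and> i mod d = j mod d"
    by (metis am1 mod_mod_cancel dvd_power[of 2 d] zero_less_numeral)
next
  assume "i div d mod d = j div d mod d \<and> i mod d = j mod d"
  then show "i mod d^2 = j mod d^2" by (simp add: power2_eq_square mod_mult2_eq)
qed
lemma am3: "(i::nat) div d div d = i div d^2"
  by (simp add: power2_eq_square div_mult2_eq)

lemma sel: "(s::nat) < 2 \<Longrightarrow> (t::nat) < 2 \<Longrightarrow> (if s = 0 then (if t = 0 then F X X else F X Y) else (if t = 0 then F Y X else F Y Y)) = F (gm X Y s) (gm X Y t)"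
  using two_cases[of s] two_cases[of t] by (auto simp: gm_def)

lemma H2_idx:
  assumes i: "i < 2*d^2" and j: "j < 2*d^2"
  shows "H2 d X Y $$ (i,j) = (if i mod d^2 = j mod d^2 then cnj (gg X Y (i div d^2) (i mod d^2 div d)) * gg X Y (j div d^2) (i mod d^2 div d) else 0)"
proof -
  have Pi: "i div d < 2*d" and Pj: "j div d < 2*d" using i j dpos
    by (auto simp: power2_eq_square intro!: less_mult_imp_div_less)
  have si: "i div d div d < 2" and sj: "j div d div d < 2" using Pi Pj by (auto intro: less_mult_imp_div_less)
  have cr: "adj_mat (gm X Y s) * gm X Y t \<in> carrier_mat d d" for s t
    using mult_carrier_mat[OF adj_carr[OF gm_carr] gm_carr] by auto
  have c1: "H2 d X Y $$ (i,j) = four_block_mat (adj_mat X * X) (adj_mat X * Y) (adj_mat Y * X) (adj_mat Y * Y) $$ (i div d, j div d) * (if i mod d = j mod d then 1 else 0)"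
  proof -
    have fb: "four_block_mat (adj_mat X * X) (adj_mat X * Y) (adj_mat Y * X) (adj_mat Y * Y) \<in> carrier_mat (2*d) (2*d)"
      using four_block_carrier_mat[OF cr[of 0 0] cr[of 1 1]] by (simp add: gm_def mult_2)
    have "i < dim_row (four_block_mat (adj_mat X * X) (adj_mat X * Y) (adj_mat Y * X) (adj_mat Y * Y)) * dim_row (1\<^sub>m d)"
         "j < dim_col (four_block_mat (adj_mat X * X) (adj_mat X * Y) (adj_mat Y * X) (adj_mat Y * Y)) * dim_col (1\<^sub>m d)"
      using fb i j by (auto simp: power2_eq_square simp del: index_mat_four_block)
    then show ?thesis unfolding H2_def apply (subst kron_idx) apply assumption+
      using i j dpos by (simp add: mod_less_divisor del: index_mat_four_block)
  qed
  have c2: "four_block_mat (adj_mat X * X) (adj_mat X * Y) (adj_mat Y * X) (adj_mat Y * Y) $$ (i div d, j div d)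
     = (adj_mat (gm X Y (i div d div d)) * gm X Y (j div d div d)) $$ (i div d mod d, j div d mod d)"
    apply (subst four_block_idx[OF _ _ _ _ Pi Pj])
    using cr[of 0 0] cr[of 0 1] cr[of 1 0] cr[of 1 1] apply (simp_all add: gm_def)[4]
    using sel[OF si sj, where F="\<lambda>A B. adj_mat A * B"] by (simp del: index_mat_four_block)
  have c3: "(adj_mat (gm X Y (i div d div d)) * gm X Y (j div d div d)) $$ (i div d mod d, j div d mod d) = (if i div d mod d = j div d mod d then cnj (gg X Y (i div d div d) (i div d mod d)) * gg X Y (j div d div d) (i div d mod d) else 0)"
    by (subst adj_prod_idx[OF gm_carr gm_carr gm_diag gm_diag]) (auto simp: dpos gg_def)
  show ?thesis unfolding c1 c2 c3 unfolding am3 am1[OF dpos] am2[OF dpos] by simp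
qed

lemma H3_idx:
  assumes i: "i < 2*d^2" and j: "j < 2*d^2"
  shows "H3 d X Y $$ (i,j) = (if i mod d^2 = j mod d^2 then cnj (gg X Y (i div d^2) (i mod d)) * gg X Y (j div d^2) (i mod d) else 0)"
proof -
  have si: "i div d^2 < 2" and sj: "j div d^2 < 2" using i j by (auto intro: less_mult_imp_div_less)
  have crD: "conj_mat (gm X Y s) * transpose_mat (gm X Y t) \<in> carrier_mat d d" for s t
    using mult_carrier_mat[OF conj_carr[OF gm_carr] transpose_carrier_mat[THEN iffD2, OF gm_carr]] by auto
  have cr: "kron (1\<^sub>m d) (conj_mat (gm X Y s) * transpose_mat (gm X Y t)) \<in> carrier_mat (d^2) (d^2)" for s t
    using kron_carr[OF one_carrier_mat crD[of s t]] by (simp add: power2_eq_square)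
  have ki: "i mod d^2 < d*d" and kj: "j mod d^2 < d*d" using dpos by (auto simp: power2_eq_square)
  have e1: "H3 d X Y $$ (i,j) = kron (1\<^sub>m d) (conj_mat (gm X Y (i div d^2)) * transpose_mat (gm X Y (j div d^2))) $$ (i mod d^2, j mod d^2)"
    unfolding H3_def
    apply (subst four_block_idx[OF _ _ _ _ i j])
    using cr[of 0 0] cr[of 0 1] cr[of 1 0] cr[of 1 1] apply (simp_all add: gm_def)[4]
    using sel[OF si sj, where F="\<lambda>A B. kron (1\<^sub>m d) (conj_mat A * transpose_mat B)"] by simp
  have e2: "kron (1\<^sub>m d) (conj_mat (gm X Y (i div d^2)) * transpose_mat (gm X Y (j div d^2))) $$ (i mod d^2, j mod d^2)
     = (if i mod d^2 div d = j mod d^2 div d then 1 else 0) * (conj_mat (gm X Y (i div d^2)) * transpose_mat (gm X Y (j div d^2))) $$ (i mod d^2 mod d, j mod d^2 mod d)"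
  proof -
    have "i mod d^2 < dim_row (1\<^sub>m d) * dim_row (conj_mat (gm X Y (i div d^2)) * transpose_mat (gm X Y (j div d^2)))"
         "j mod d^2 < dim_col (1\<^sub>m d) * dim_col (conj_mat (gm X Y (i div d^2)) * transpose_mat (gm X Y (j div d^2)))"
      using crD[of "i div d^2" "j div d^2"] ki kj by auto
    then show ?thesis apply (subst kron_idx) apply assumption+
      using crD[of "i div d^2" "j div d^2"] ki kj dpos carrier_matD[OF conj_carr[OF gm_carr[of "i div d^2"]]]
        carrier_matD[OF gm_carr[of "j div d^2"]] by (simp add: less_mult_imp_div_less)
  qed
  have e3: "(conj_mat (gm X Y (i div d^2)) * transpose_mat (gm X Y (j div d^2))) $$ (i mod d^2 mod d, j mod d^2 mod d)
    = (if i mod d = j mod d then cnj (gg X Y (i div d^2) (i mod d)) * gg X Y (j div d^2) (i mod d) else 0)"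
    apply (subst conj_prod_idx[OF gm_carr gm_carr gm_diag gm_diag])
    using dpos by (auto simp: gg_def power2_eq_square mod_mod_cancel)
  show ?thesis unfolding e1 e2 e3 unfolding am1[OF dpos] am2[OF dpos] by simp
qed

lemma vs_idx: "A \<in> carrier_mat d d \<Longrightarrow> diagonal_mat A \<Longrightarrow> k < d*d \<Longrightarrow>
   vec_stack A $$ (k,0) = (if k mod d = k div d then A $$ (k div d, k div d) else 0)"
  unfolding vec_stack_def diagonal_mat_def using dpos
  by (auto simp: less_mult_imp_div_less)

end




lemma split2: "(\<Sum>i<2*n. f i) = (\<Sum>k<n. f k) + (\<Sum>k<n. f (n+k))" for f :: "nat \<Rightarrow> complex"
proof -
  have "(\<Sum>i<2*n. f i) = sum f {0..<n} + sum f {0+n..<n+n}"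
    by (simp add: lessThan_atLeast0 sum.atLeastLessThan_concat mult_2)
  also have "sum f {0+n..<n+n} = (\<Sum>k<n. f (n+k))"
    by (subst sum.shift_bounds_nat_ivl) (simp add: lessThan_atLeast0 add.commute)
  finally show ?thesis by (simp add: lessThan_atLeast0)
qed

lemma QF: "A \<in> carrier_mat N N \<Longrightarrow> v \<in> carrier_vec N \<Longrightarrow>
  conjugate v \<bullet> (A *\<^sub>v v) = (\<Sum>i<N. cnj (v$i) * (\<Sum>j<N. A $$ (i,j) * v$j))"
  unfolding scalar_prod_def
  by (auto simp: lessThan_atLeast0 scalar_prod_def intro!: sum.cong)

lemma blk:
  fixes v :: "nat \<Rightarrow> complex"
  assumes n: "n > 0"
  shows "(\<Sum>i<2*n. cnj (v i) * (\<Sum>j<2*n. (if i mod n = j mod n then c (i div n) (j div n) (i mod n) else 0) * v j))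
   = (\<Sum>k<n. cnj (v k) * (c 0 0 k * v k + c 0 1 k * v (n+k)) + cnj (v (n+k)) * (c 1 0 k * v k + c 1 1 k * v (n+k)))"
proof -
  have inner: "(\<Sum>j<2*n. (if k = j mod n then c s (j div n) k else 0) * v j) = c s 0 k * v k + c s 1 k * v (n+k)"
    if k: "k < n" for k s
  proof -
    have "(\<Sum>j<2*n. (if k = j mod n then c s (j div n) k else 0) * v j)
      = (\<Sum>j<n. (if k = j then c s 0 k * v j else 0)) + (\<Sum>j<n. (if k = j then c s 1 k * v (n+j) else 0))"
      unfolding split2 using k by (intro arg_cong2[where f="(+)"] sum.cong) auto
    also have "\<dots> = c s 0 k * v k + c s 1 k * v (n+k)" using k by simp
    finally show ?thesis .
  qed
  have "(\<Sum>i<2*n. cnj (v i) * (\<Sum>j<2*n. (if i mod n = j mod n then c (i div n) (j div n) (i mod n) else 0) * v j))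
    = (\<Sum>k<n. cnj (v k) * (\<Sum>j<2*n. (if k mod n = j mod n then c (k div n) (j div n) (k mod n) else 0) * v j))
     + (\<Sum>k<n. cnj (v (n+k)) * (\<Sum>j<2*n. (if (n+k) mod n = j mod n then c ((n+k) div n) (j div n) ((n+k) mod n) else 0) * v j))"
    by (rule split2)
  also have "\<dots> = (\<Sum>k<n. cnj (v k) * (c 0 0 k * v k + c 0 1 k * v (n+k))) + (\<Sum>k<n. cnj (v (n+k)) * (c 1 0 k * v k + c 1 1 k * v (n+k)))"
  proof (intro arg_cong2[where f="(+)"] sum.cong refl)
    fix k assume "k \<in> {..<n}"
    then have k: "k < n" by simp
    have km: "k mod n = k" and kd: "k div n = 0" using k by auto
    show "cnj (v k) * (\<Sum>j<2*n. (if k mod n = j mod n then c (k div n) (j div n) (k mod n) else 0) * v j) = cnj (v k) * (c 0 0 k * v k + c 0 1 k * v (n+k))"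
      unfolding km kd using inner[OF k, of 0] by simp
    have km2: "(n+k) mod n = k" and kd2: "(n+k) div n = 1" using k by auto
    show "cnj (v (n+k)) * (\<Sum>j<2*n. (if (n+k) mod n = j mod n then c ((n+k) div n) (j div n) ((n+k) mod n) else 0) * v j) = cnj (v (n+k)) * (c 1 0 k * v k + c 1 1 k * v (n+k))"
      unfolding km2 kd2 using inner[OF k, of 1] by simp
  qed
  finally show ?thesis by (simp add: sum.distrib)
qed

lemma rank1:
  fixes v a :: "nat \<Rightarrow> nat \<Rightarrow> complex"
  shows "cnj (u::complex) * (cnj (a 0 k) * a 0 k * u + cnj (a 0 k) * a 1 k * w) + cnj w * (cnj (a 1 k) * a 0 k * u + cnj (a 1 k) * a 1 k * w)
    = cnj (a 0 k * u + a 1 k * w) * (a 0 k * u + a 1 k * w)"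
  by (simp add: algebra_simps)

lemma qsplit:
  fixes h1 h2 h3 h4 :: "nat \<Rightarrow> nat \<Rightarrow> complex" and v :: "nat \<Rightarrow> complex"
  shows "(\<Sum>i<N. cnj (v i) * (\<Sum>j<N. (h1 i j - 1/2 * (h2 i j + h3 i j) + 1/4 * h4 i j) * v j))
   = (\<Sum>i<N. cnj (v i) * (\<Sum>j<N. h1 i j * v j)) - 1/2 * ((\<Sum>i<N. cnj (v i) * (\<Sum>j<N. h2 i j * v j)) + (\<Sum>i<N. cnj (v i) * (\<Sum>j<N. h3 i j * v j)))
     + 1/4 * (\<Sum>i<N. cnj (v i) * (\<Sum>j<N. h4 i j * v j))"
  by (simp add: algebra_simps sum.distrib sum_subtractf sum_distrib_left)

lemma rank1_sum:
  fixes f :: "nat \<Rightarrow> complex" and v :: "nat \<Rightarrow> complex"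
  shows "(\<Sum>i<N. cnj (v i) * (\<Sum>j<N. cnj (f i) * f j * v j)) = cnj (\<Sum>j<N. f j * v j) * (\<Sum>j<N. f j * v j)"
  by (simp add: sum_distrib_left sum_distrib_right cnj_sum algebra_simps)

lemma rank1':
  fixes a0 a1 u w :: complex
  shows "cnj u * (cnj a0 * a0 * u + cnj a0 * a1 * w) + cnj w * (cnj a1 * a0 * u + cnj a1 * a1 * w)
    = cnj (a0 * u + a1 * w) * (a0 * u + a1 * w)"
  by (simp add: algebra_simps)

lemma cong2:
  fixes v :: "nat \<Rightarrow> complex"
  assumes "\<And>i j. i < N \<Longrightarrow> j < N \<Longrightarrow> f i j = g i j"
  shows "(\<Sum>i<N. cnj (v i) * (\<Sum>j<N. f i j * v j)) = (\<Sum>i<N. cnj (v i) * (\<Sum>j<N. g i j * v j))"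
  using assms by (intro sum.cong refl arg_cong2[where f=times]) auto

definition zf :: "nat \<Rightarrow> complex mat \<Rightarrow> complex mat \<Rightarrow> complex vec \<Rightarrow> nat \<Rightarrow> nat \<Rightarrow> complex" where
  "zf d X Y v k r = gg X Y 0 r * v $ k + gg X Y 1 r * v $ (d^2 + k)"
definition Sf :: "nat \<Rightarrow> complex mat \<Rightarrow> complex mat \<Rightarrow> complex vec \<Rightarrow> complex" where
  "Sf d X Y v = (\<Sum>k<d^2. if k mod d = k div d then zf d X Y v k (k div d) else 0)"

lemma cnj_sq: "cnj (t::complex) * t = complex_of_real ((cmod t)^2)"
  using complex_norm_square[of t] by (simp add: mult.commute)

context
  fixes d :: nat and X Y :: "complex mat"
  assumes X: "X \<in> carrier_mat d d" and Y: "Y \<in> carrier_mat d d"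
    and dX: "diagonal_mat X" and dY: "diagonal_mat Y" and dpos: "d > 0"
begin

lemmas gm_carr' = gm_carr[OF X Y dX dY dpos]
lemmas gm_diag' = gm_diag[OF X Y dX dY dpos]
lemmas vs_idx' = vs_idx[OF X Y dX dY dpos]
lemmas sel' = sel[OF X Y dX dY dpos]
lemmas am1' = am1[OF X Y dX dY dpos]
lemmas am2' = am2[OF X Y dX dY dpos]
lemmas am3' = am3[OF X Y dX dY dpos]
lemmas H1_idx' = H1_idx[OF X Y dX dY dpos]
lemmas H2_idx' = H2_idx[OF X Y dX dY dpos]
lemmas H3_idx' = H3_idx[OF X Y dX dY dpos]
lemmas Gm_eq' = Gm_eq[OF X Y dX dY dpos]

lemma H4_idx:
  assumes i: "i < 2*d^2" and j: "j < 2*d^2"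
  shows "H4 X Y $$ (i,j) = cnj (wv d X Y (i div d^2) (i mod d^2)) * wv d X Y (j div d^2) (j mod d^2)"
proof -
  have si: "i div d^2 < 2" and sj: "j div d^2 < 2" using i j by (auto intro: less_mult_imp_div_less)
  have vc: "vec_stack A \<in> carrier_mat (d^2) 1" if "A \<in> carrier_mat d d" for A
    using that unfolding vec_stack_def by (auto simp: power2_eq_square)
  have cr: "conj_mat (vec_stack (gm X Y s)) * transpose_mat (vec_stack (gm X Y t)) \<in> carrier_mat (d^2) (d^2)" for s t
    using vc[OF gm_carr'[of s]] vc[OF gm_carr'[of t]] unfolding conj_mat_def by auto
  have ki: "i mod d^2 < d*d" and kj: "j mod d^2 < d*d" using dpos by (auto simp: power2_eq_square)
  have e1: "H4 X Y $$ (i,j) = (conj_mat (vec_stack (gm X Y (i div d^2))) * transpose_mat (vec_stack (gm X Y (j div d^2)))) $$ (i mod d^2, j mod d^2)"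
    unfolding H4_def
    apply (subst four_block_idx[OF _ _ _ _ i j])
    using cr[of 0 0] cr[of 0 1] cr[of 1 0] cr[of 1 1] apply (simp_all add: gm_def)[4]
    using sel'[OF si sj, where F="\<lambda>A B. conj_mat (vec_stack A) * transpose_mat (vec_stack B)"] by simp
  have e2: "(conj_mat (vec_stack (gm X Y (i div d^2))) * transpose_mat (vec_stack (gm X Y (j div d^2)))) $$ (i mod d^2, j mod d^2)
    = cnj (vec_stack (gm X Y (i div d^2)) $$ (i mod d^2, 0)) * vec_stack (gm X Y (j div d^2)) $$ (j mod d^2, 0)"
    using vc[OF gm_carr'[of "i div d^2"]] vc[OF gm_carr'[of "j div d^2"]] ki kj unfolding conj_mat_def
    by (simp add: scalar_prod_def power2_eq_square)
  have e3: "cnj (vec_stack (gm X Y (i div d^2)) $$ (i mod d^2, 0)) * vec_stack (gm X Y (j div d^2)) $$ (j mod d^2, 0)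
     = cnj (wv d X Y (i div d^2) (i mod d^2)) * wv d X Y (j div d^2) (j mod d^2)"
    using vs_idx'[OF gm_carr' gm_diag' ki] vs_idx'[OF gm_carr' gm_diag' kj]
    by (simp add: wv_def gg_def)
  show ?thesis unfolding e1 e2 e3 ..
qed

lemma gg1: "gg X Y 1 r = Y $$ (r,r)" and gg0: "gg X Y 0 r = X $$ (r,r)" by (auto simp: gg_def gm_def)


lemma cr_adj: "adj_mat (gm X Y s) * gm X Y t \<in> carrier_mat d d"
  using mult_carrier_mat[OF adj_carr[OF gm_carr'] gm_carr'] by auto

lemma H1c: "H1 d X Y \<in> carrier_mat (2*d^2) (2*d^2)"
  unfolding H1_def by (rule kron_carr) (auto simp: mat_of_rows_list_def)

lemma H2c: "H2 d X Y \<in> carrier_mat (2*d^2) (2*d^2)"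
proof -
  have fb: "four_block_mat (adj_mat X * X) (adj_mat X * Y) (adj_mat Y * X) (adj_mat Y * Y) \<in> carrier_mat (d+d) (d+d)"
    using four_block_carrier_mat[OF cr_adj[of 0 0] cr_adj[of 1 1]] by (simp add: gm_def)
  have e: "2*d^2 = (d+d)*d" by (simp add: power2_eq_square)
  from kron_carr[OF fb one_carrier_mat[of d]] show ?thesis
    unfolding H2_def e by simp
qed

lemma crD: "conj_mat (gm X Y s) * transpose_mat (gm X Y t) \<in> carrier_mat d d"
  using mult_carrier_mat[OF conj_carr[OF gm_carr'] transpose_carrier_mat[THEN iffD2, OF gm_carr']] by auto

lemma H3c: "H3 d X Y \<in> carrier_mat (2*d^2) (2*d^2)"
proof -
  have kc: "kron (1\<^sub>m d) (conj_mat (gm X Y s) * transpose_mat (gm X Y t)) \<in> carrier_mat (d*d) (d*d)" for s t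
    using kron_carr[OF one_carrier_mat crD[of s t]] by simp
  have e: "2*d^2 = d*d + d*d" by (simp add: power2_eq_square)
  from four_block_carrier_mat[OF kc[of 0 0] kc[of 1 1]] show ?thesis
    unfolding H3_def e by (simp add: gm_def)
qed

lemma H4c: "H4 X Y \<in> carrier_mat (2*d^2) (2*d^2)"
proof -
  have vc: "vec_stack A \<in> carrier_mat (d*d) 1" if "A \<in> carrier_mat d d" for A
    using that unfolding vec_stack_def by auto
  have cc: "conj_mat (vec_stack A) * transpose_mat (vec_stack B) \<in> carrier_mat (d*d) (d*d)"
    if "A \<in> carrier_mat d d" "B \<in> carrier_mat d d" for A B
    using vc[OF that(1)] vc[OF that(2)] unfolding conj_mat_def by auto
  have e: "2*d^2 = d*d + d*d" by (simp add: power2_eq_square)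
  from four_block_carrier_mat[OF cc[OF X X] cc[OF Y Y]] show ?thesis
    unfolding H4_def e by simp
qed

lemma Hc: "Hmat d X Y \<in> carrier_mat (2*d^2) (2*d^2)"
  using H1c H2c H3c H4c unfolding Hmat_def carrier_mat_def by simp

lemma Hmat_idx:
  assumes i: "i < 2*d^2" and j: "j < 2*d^2"
  shows "Hmat d X Y $$ (i,j) = H1 d X Y $$ (i,j) - 1/2 * (H2 d X Y $$ (i,j) + H3 d X Y $$ (i,j)) + 1/4 * H4 X Y $$ (i,j)"
  using H1c H2c H3c H4c i j unfolding Hmat_def carrier_mat_def by simp

lemma Gm_cnj: "cnj (Gm d X Y s t) = Gm d X Y t s"
  unfolding Gm_def cnj_sum by (simp add: mult.commute)

lemma herm: "adj_mat (Hmat d X Y) = Hmat d X Y"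
proof (rule eq_matI)
  show "dim_row (adj_mat (Hmat d X Y)) = dim_row (Hmat d X Y)" "dim_col (adj_mat (Hmat d X Y)) = dim_col (Hmat d X Y)"
    using Hc unfolding adj_mat_def by auto
  fix i j assume "i < dim_row (Hmat d X Y)" "j < dim_col (Hmat d X Y)"
  then have i: "i < 2*d^2" and j: "j < 2*d^2" using Hc by auto
  have a: "adj_mat (Hmat d X Y) $$ (i,j) = cnj (Hmat d X Y $$ (j,i))"
    using Hc i j unfolding adj_mat_def by simp
  show "adj_mat (Hmat d X Y) $$ (i,j) = Hmat d X Y $$ (i,j)"
  proof (cases "i mod d^2 = j mod d^2")
    case True
    then have "i mod d = j mod d" using am2'[OF dpos] by blast
    then show ?thesis unfolding a Hmat_idx[OF i j] Hmat_idx[OF j i]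
      using True by (simp add: H1_idx'[OF i j] H1_idx'[OF j i] H2_idx'[OF i j] H2_idx'[OF j i]
        H3_idx'[OF i j] H3_idx'[OF j i] H4_idx[OF i j] H4_idx[OF j i] Gm_cnj mult.commute)
  next
    case False
    then show ?thesis unfolding a Hmat_idx[OF i j] Hmat_idx[OF j i]
      by (simp add: H1_idx'[OF i j] H1_idx'[OF j i] H2_idx'[OF i j] H2_idx'[OF j i]
        H3_idx'[OF i j] H3_idx'[OF j i] H4_idx[OF i j] H4_idx[OF j i] mult.commute)
  qed
qed


lemma QH:
  assumes v: "v \<in> carrier_vec (2*d^2)"
  shows "conjugate v \<bullet> (Hmat d X Y *\<^sub>v v) =
    (\<Sum>k<d^2. \<Sum>r<d. cnj (zf d X Y v k r) * zf d X Y v k r)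
    - 1/2 * ((\<Sum>k<d^2. cnj (zf d X Y v k (k div d)) * zf d X Y v k (k div d))
           + (\<Sum>k<d^2. cnj (zf d X Y v k (k mod d)) * zf d X Y v k (k mod d)))
    + 1/4 * (cnj (Sf d X Y v) * Sf d X Y v)"
proof -
  let ?n = "d^2"
  have n: "?n > 0" using dpos by simp
  let ?v = "\<lambda>i. v $ i"
  let ?q = "\<lambda>h. (\<Sum>i<2*?n. cnj (?v i) * (\<Sum>j<2*?n. h i j * ?v j))"
  have q0: "conjugate v \<bullet> (Hmat d X Y *\<^sub>v v) = ?q (\<lambda>i j. H1 d X Y $$ (i,j) - 1/2 * (H2 d X Y $$ (i,j) + H3 d X Y $$ (i,j)) + 1/4 * H4 X Y $$ (i,j))"
    unfolding QF[OF Hc v] by (rule cong2) (simp add: Hmat_idx)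
  also have "\<dots> = ?q (\<lambda>i j. H1 d X Y $$ (i,j)) - 1/2 * (?q (\<lambda>i j. H2 d X Y $$ (i,j)) + ?q (\<lambda>i j. H3 d X Y $$ (i,j))) + 1/4 * ?q (\<lambda>i j. H4 X Y $$ (i,j))"
    by (rule qsplit)
  also have "?q (\<lambda>i j. H1 d X Y $$ (i,j)) = (\<Sum>k<d^2. \<Sum>r<d. cnj (zf d X Y v k r) * zf d X Y v k r)"
  proof -
    have "?q (\<lambda>i j. H1 d X Y $$ (i,j)) = ?q (\<lambda>i j. if i mod ?n = j mod ?n then (\<lambda>s t k. Gm d X Y s t) (i div ?n) (j div ?n) (i mod ?n) else 0)"
      by (rule cong2) (simp add: H1_idx')
    also have "\<dots> = (\<Sum>k<?n. cnj (?v k) * (Gm d X Y 0 0 * ?v k + Gm d X Y 0 1 * ?v (?n+k)) + cnj (?v (?n+k)) * (Gm d X Y 1 0 * ?v k + Gm d X Y 1 1 * ?v (?n+k)))"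
      by (rule blk[OF n])
    also have "\<dots> = (\<Sum>k<d^2. \<Sum>r<d. cnj (zf d X Y v k r) * zf d X Y v k r)"
    proof (rule sum.cong[OF refl])
      fix k
      have "(\<Sum>r<d. cnj (zf d X Y v k r) * zf d X Y v k r) = (\<Sum>r<d. cnj (?v k) * (cnj (gg X Y 0 r) * gg X Y 0 r * ?v k + cnj (gg X Y 0 r) * gg X Y 1 r * ?v (?n+k)) + cnj (?v (?n+k)) * (cnj (gg X Y 1 r) * gg X Y 0 r * ?v k + cnj (gg X Y 1 r) * gg X Y 1 r * ?v (?n+k)))"
        unfolding zf_def by (rule sum.cong[OF refl], rule rank1'[symmetric])
      also have "\<dots> = cnj (?v k) * (Gm d X Y 0 0 * ?v k + Gm d X Y 0 1 * ?v (?n+k)) + cnj (?v (?n+k)) * (Gm d X Y 1 0 * ?v k + Gm d X Y 1 1 * ?v (?n+k))"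
        unfolding Gm_def by (simp add: sum.distrib sum_distrib_left sum_distrib_right algebra_simps)
      finally show "cnj (?v k) * (Gm d X Y 0 0 * ?v k + Gm d X Y 0 1 * ?v (?n+k)) + cnj (?v (?n+k)) * (Gm d X Y 1 0 * ?v k + Gm d X Y 1 1 * ?v (?n+k)) = (\<Sum>r<d. cnj (zf d X Y v k r) * zf d X Y v k r)" by simp
    qed
    finally show ?thesis .
  qed
  also have "?q (\<lambda>i j. H2 d X Y $$ (i,j)) = (\<Sum>k<d^2. cnj (zf d X Y v k (k div d)) * zf d X Y v k (k div d))"
  proof -
    have "?q (\<lambda>i j. H2 d X Y $$ (i,j)) = ?q (\<lambda>i j. if i mod ?n = j mod ?n then (\<lambda>s t k. cnj (gg X Y s (k div d)) * gg X Y t (k div d)) (i div ?n) (j div ?n) (i mod ?n) else 0)"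
      by (rule cong2) (simp add: H2_idx')
    also have "\<dots> = (\<Sum>k<?n. cnj (?v k) * (cnj (gg X Y 0 (k div d)) * gg X Y 0 (k div d) * ?v k + cnj (gg X Y 0 (k div d)) * gg X Y 1 (k div d) * ?v (?n+k)) + cnj (?v (?n+k)) * (cnj (gg X Y 1 (k div d)) * gg X Y 0 (k div d) * ?v k + cnj (gg X Y 1 (k div d)) * gg X Y 1 (k div d) * ?v (?n+k)))"
      by (rule blk[OF n])
    also have "\<dots> = (\<Sum>k<d^2. cnj (zf d X Y v k (k div d)) * zf d X Y v k (k div d))"
      unfolding zf_def by (rule sum.cong[OF refl], rule rank1')
    finally show ?thesis .
  qed
  also have "?q (\<lambda>i j. H3 d X Y $$ (i,j)) = (\<Sum>k<d^2. cnj (zf d X Y v k (k mod d)) * zf d X Y v k (k mod d))"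
  proof -
    have mm: "i mod d^2 mod d = i mod d" for i
      by (simp add: mod_mod_cancel)
    have "?q (\<lambda>i j. H3 d X Y $$ (i,j)) = ?q (\<lambda>i j. if i mod ?n = j mod ?n then (\<lambda>s t k. cnj (gg X Y s (k mod d)) * gg X Y t (k mod d)) (i div ?n) (j div ?n) (i mod ?n) else 0)"
      by (rule cong2) (auto simp: H3_idx' mm am2'[OF dpos])
    also have "\<dots> = (\<Sum>k<?n. cnj (?v k) * (cnj (gg X Y 0 (k mod d)) * gg X Y 0 (k mod d) * ?v k + cnj (gg X Y 0 (k mod d)) * gg X Y 1 (k mod d) * ?v (?n+k)) + cnj (?v (?n+k)) * (cnj (gg X Y 1 (k mod d)) * gg X Y 0 (k mod d) * ?v k + cnj (gg X Y 1 (k mod d)) * gg X Y 1 (k mod d) * ?v (?n+k)))"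
      by (rule blk[OF n])
    also have "\<dots> = (\<Sum>k<d^2. cnj (zf d X Y v k (k mod d)) * zf d X Y v k (k mod d))"
      unfolding zf_def by (rule sum.cong[OF refl], rule rank1')
    finally show ?thesis .
  qed
  also have "?q (\<lambda>i j. H4 X Y $$ (i,j)) = cnj (Sf d X Y v) * Sf d X Y v"
  proof -
    let ?w = "\<lambda>i. wv d X Y (i div ?n) (i mod ?n)"
    have "?q (\<lambda>i j. H4 X Y $$ (i,j)) = ?q (\<lambda>i j. cnj (?w i) * ?w j)"
      by (rule cong2) (simp add: H4_idx)
    also have "\<dots> = cnj (\<Sum>j<2*?n. ?w j * ?v j) * (\<Sum>j<2*?n. ?w j * ?v j)"
      by (rule rank1_sum)
    also have "(\<Sum>j<2*?n. ?w j * ?v j) = Sf d X Y v"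
    proof -
      have "(\<Sum>j<2*?n. ?w j * ?v j) = (\<Sum>k<?n. ?w k * ?v k) + (\<Sum>k<?n. ?w (?n+k) * ?v (?n+k))"
        by (rule split2)
      also have "\<dots> = (\<Sum>k<?n. wv d X Y 0 k * ?v k + wv d X Y 1 k * ?v (?n+k))"
        apply (simp add: sum.distrib)
        apply (rule sum.cong[OF refl])
        using n by simp
      also have "\<dots> = Sf d X Y v"
        unfolding Sf_def by (rule sum.cong[OF refl]) (simp add: wv_def zf_def)
      finally show ?thesis .
    qed
    finally show ?thesis .
  qed
  finally show ?thesis .
qed

end



lemma Tnn:
  fixes z :: "nat \<Rightarrow> complex"
  assumes "p < d" "q < d"
  shows "(\<Sum>r<d. (cmod (z r))^2) - 1/2 * ((cmod (z p))^2 + (cmod (z q))^2) \<ge> 0"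
proof -
  have "(cmod (z p))^2 \<le> (\<Sum>r<d. (cmod (z r))^2)" "(cmod (z q))^2 \<le> (\<Sum>r<d. (cmod (z r))^2)"
    using assms by (auto intro!: member_le_sum)
  then show ?thesis unfolding distrib_left by linarith
qed

lemma Tpos:
  fixes z :: "nat \<Rightarrow> complex"
  assumes "p < d" "q < d" "p \<noteq> q" "r0 < d" "z r0 \<noteq> 0"
  shows "(\<Sum>r<d. (cmod (z r))^2) - 1/2 * ((cmod (z p))^2 + (cmod (z q))^2) > 0"
proof -
  have "(\<Sum>r\<in>{p,q}. (cmod (z r))^2) \<le> (\<Sum>r<d. (cmod (z r))^2)"
    using assms by (intro sum_mono2) auto
  then have a: "(cmod (z p))^2 + (cmod (z q))^2 \<le> (\<Sum>r<d. (cmod (z r))^2)" using assms by simp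
  have "0 < (\<Sum>r<d. (cmod (z r))^2)"
    using assms by (intro sum_pos2[of _ r0]) auto
  with a show ?thesis unfolding distrib_left by linarith
qed

lemma Tzero:
  fixes z :: "nat \<Rightarrow> complex"
  assumes "p < d" "(\<Sum>r<d. (cmod (z r))^2) - 1/2 * ((cmod (z p))^2 + (cmod (z p))^2) = 0"
  shows "\<forall>r<d. r \<noteq> p \<longrightarrow> z r = 0"
proof -
  have "(\<Sum>r<d. (cmod (z r))^2) = (cmod (z p))^2 + (\<Sum>r\<in>{..<d}-{p}. (cmod (z r))^2)"
    using assms(1) by (subst sum.remove[of _ p]) auto
  with assms(2) have "(\<Sum>r\<in>{..<d}-{p}. (cmod (z r))^2) = 0" by simp
  then have "\<forall>r\<in>{..<d}-{p}. (cmod (z r))^2 = 0"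
    by (subst (asm) sum_nonneg_eq_0_iff) auto
  then show ?thesis by auto
qed

lemma ALG:
  fixes a b a' b' xp yp xq yq xr yr :: complex
  assumes "xp * a + yp * b \<noteq> 0" "xq * a + yq * b = 0" "xr * a + yr * b = 0"
    "xp * a' + yp * b' = 0" "xq * a' + yq * b' \<noteq> 0" "xr * a' + yr * b' = 0"
  shows "xr = 0 \<and> yr = 0"
proof (cases "a * b' - a' * b = 0")
  case True
  have "a' * (xp * a + yp * b) = a * (xp * a' + yp * b') + yp * (a' * b - a * b')"
    by (simp add: algebra_simps)
  also have "\<dots> = 0" using assms(4) True by (simp add: algebra_simps)
  finally have a0: "a' = 0" using assms(1) by simp
  have "b' * (xp * a + yp * b) = b * (xp * a' + yp * b') + xp * (a * b' - a' * b)"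
    by (simp add: algebra_simps)
  also have "\<dots> = 0" using assms(4) True by simp
  finally have b0: "b' = 0" using assms(1) by simp
  then show ?thesis using a0 assms(5) by simp
next
  case False
  have "xr * (a * b' - a' * b) = b' * (xr * a + yr * b) - b * (xr * a' + yr * b')"
    by (simp add: algebra_simps)
  also have "\<dots> = 0" using assms(3,6) by simp
  finally have "xr = 0" using False by simp
  have "yr * (a * b' - a' * b) = a * (xr * a' + yr * b') - a' * (xr * a + yr * b)"
    by (simp add: algebra_simps)
  also have "\<dots> = 0" using assms(3,6) by simp
  finally have "yr = 0" using False by simp
  with \<open>xr = 0\<close> show ?thesis by simp
qed

context
  fixes d :: nat and X Y :: "complex mat"
  assumes X: "X \<in> carrier_mat d d" and Y: "Y \<in> carrier_mat d d"
    and dX: "diagonal_mat X" and dY: "diagonal_mat Y" and dpos: "d > 0"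
begin

lemma LI:
  assumes g: "generic_pair d X Y" and ab: "a \<noteq> 0 \<or> b \<noteq> 0"
  shows "\<exists>r<d. gg X Y 0 r * a + gg X Y 1 r * b \<noteq> 0"
proof (rule ccontr)
  assume "\<not> ?thesis"
  then have z: "\<And>r. r < d \<Longrightarrow> X $$ (r,r) * a + Y $$ (r,r) * b = 0" by (auto simp: gg_def gm_def)
  have "a \<cdot>\<^sub>m X + b \<cdot>\<^sub>m Y = 0\<^sub>m d d"
  proof (rule eq_matI)
    fix i j assume "i < dim_row (0\<^sub>m d d :: complex mat)" "j < dim_col (0\<^sub>m d d :: complex mat)"
    then have i: "i < d" and j: "j < d" by auto
    show "(a \<cdot>\<^sub>m X + b \<cdot>\<^sub>m Y) $$ (i,j) = 0\<^sub>m d d $$ (i,j)"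
    proof (cases "i = j")
      case True then show ?thesis using z[OF i] i j X Y by (simp add: mult.commute)
    next
      case False then show ?thesis using i j X Y dX dY unfolding diagonal_mat_def by simp
    qed
  qed (use X Y in auto)
  with g ab show False unfolding generic_pair_def by blast
qed

lemma detz:
  assumes r: "r < d" and xr: "X $$ (r,r) = 0" and yr: "Y $$ (r,r) = 0"
  shows "det (a \<cdot>\<^sub>m X + b \<cdot>\<^sub>m Y) = 0"
proof -
  let ?M = "a \<cdot>\<^sub>m X + b \<cdot>\<^sub>m Y"
  have M: "?M \<in> carrier_mat d d" using X Y by auto
  have ut: "upper_triangular ?M"
    unfolding upper_triangular_def using X Y dX dY unfolding diagonal_mat_def by auto
  have "det ?M = (\<Prod>i = 0..<d. ?M $$ (i,i))"
    using det_upper_triangular[OF ut M] prod_list_diag_prod[of ?M] M carrier_matD[OF Y] by simp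
  also have "\<dots> = 0" using r xr yr X Y by (subst prod_zero_iff) (auto intro!: bexI[of _ r])
  finally show ?thesis .
qed

end

theorem theorem5p1:
  fixes d :: nat and X Y :: "complex mat"
  assumes "d \<ge> 3"
    and "X \<in> carrier_mat d d" and "Y \<in> carrier_mat d d"
    and "diagonal_mat X" and "diagonal_mat Y"
    and "generic_pair d X Y"
  shows "pos_def_mat (2 * d^2) (Hmat d X Y)"
proof -
  note d3 = assms(1) and X = assms(2) and Y = assms(3) and dX = assms(4) and dY = assms(5) and g = assms(6)
  have dpos: "d > 0" using d3 by simp
  note ctx = X Y dX dY dpos
  show ?thesis unfolding pos_def_mat_def
  proof (intro conjI ballI impI)
    show "Hmat d X Y \<in> carrier_mat (2 * d^2) (2 * d^2)" by (rule Hc[OF ctx])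
    show "adj_mat (Hmat d X Y) = Hmat d X Y" by (rule herm[OF ctx])
    fix v :: "complex vec" assume v: "v \<in> carrier_vec (2 * d^2)" and nz: "v \<noteq> 0\<^sub>v (2 * d^2)"
    define z where "z = zf d X Y v"
    define n where "n = d^2"
    define T where "T k = (\<Sum>r<d. (cmod (z k r))^2) - 1/2 * ((cmod (z k (k div d)))^2 + (cmod (z k (k mod d)))^2)" for k
    define S where "S = Sf d X Y v"
    have S_def': "S = (\<Sum>k<n. if k mod d = k div d then z k (k div d) else 0)"
      unfolding S_def Sf_def z_def n_def ..
    have "conjugate v \<bullet> (Hmat d X Y *\<^sub>v v) = complex_of_real ((\<Sum>k<n. \<Sum>r<d. (cmod (z k r))^2)
      - 1/2 * ((\<Sum>k<n. (cmod (z k (k div d)))^2) + (\<Sum>k<n. (cmod (z k (k mod d)))^2)) + 1/4 * (cmod S)^2)"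
      unfolding QH[OF ctx v] cnj_sq z_def n_def S_def by simp
    then have R1: "Re (conjugate v \<bullet> (Hmat d X Y *\<^sub>v v)) = (\<Sum>k<n. \<Sum>r<d. (cmod (z k r))^2)
      - 1/2 * ((\<Sum>k<n. (cmod (z k (k div d)))^2) + (\<Sum>k<n. (cmod (z k (k mod d)))^2)) + 1/4 * (cmod S)^2"
      by (simp only: Re_complex_of_real)
    have R2: "(\<Sum>k<n. \<Sum>r<d. (cmod (z k r))^2)
      - 1/2 * ((\<Sum>k<n. (cmod (z k (k div d)))^2) + (\<Sum>k<n. (cmod (z k (k mod d)))^2)) = (\<Sum>k<n. T k)"
      unfolding T_def by (simp only: sum_subtractf sum_distrib_left[symmetric] sum.distrib)
    have Req: "Re (conjugate v \<bullet> (Hmat d X Y *\<^sub>v v)) = (\<Sum>k<n. T k) + 1/4 * (cmod S)^2"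
      using R1 R2 by simp
    have pq: "k div d < d" "k mod d < d" if "k < n" for k
      using that dpos unfolding n_def by (auto simp: power2_eq_square less_mult_imp_div_less)
    have Tnn': "T k \<ge> 0" if "k < n" for k
      unfolding T_def using Tnn pq[OF that] by blast
    show "Re (conjugate v \<bullet> (Hmat d X Y *\<^sub>v v)) > 0"
    proof (rule ccontr)
      assume "\<not> ?thesis"
      then have le: "(\<Sum>k<n. T k) + 1/4 * (cmod S)^2 \<le> 0" using Req by simp
      have s0: "(\<Sum>k<n. T k) \<ge> 0" using Tnn' by (intro sum_nonneg) auto
      have "(cmod S)^2 \<ge> 0" by simp
      with le s0 have sT: "(\<Sum>k<n. T k) = 0" and "(cmod S)^2 = 0" by linarith+
      then have S0: "S = 0" by simp
      have T0: "T k = 0" if "k < n" for k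
        using sT Tnn' that by (subst (asm) sum_nonneg_eq_0_iff) auto
      obtain i where i: "i < 2*n" "v $ i \<noteq> 0"
        using v nz unfolding n_def by (auto simp: vec_eq_iff)
      obtain k where k: "k < n" and kv: "v $ k \<noteq> 0 \<or> v $ (n+k) \<noteq> 0"
      proof (cases "i < n")
        case True then show ?thesis using that i by blast
      next
        case False then show ?thesis using that[of "i - n"] i by auto
      qed
      have "\<exists>r<d. gg X Y 0 r * v $ k + gg X Y 1 r * v $ (n+k) \<noteq> 0"
        by (rule LI[OF ctx g kv])
      then obtain r0 where r0d: "r0 < d" and r0nz: "gg X Y 0 r0 * v $ k + gg X Y 1 r0 * v $ (n+k) \<noteq> 0"
        by blast
      have zr0: "z k r0 \<noteq> 0" using r0nz unfolding z_def zf_def n_def .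
      define p where "p = k div d"
      have pd: "p < d" using pq(1)[OF k] unfolding p_def .
      have pq_eq: "k mod d = k div d"
      proof (rule ccontr)
        assume ne: "k mod d \<noteq> k div d"
        have "T k > 0" unfolding T_def by (rule Tpos[where z="z k", OF pq(1)[OF k] pq(2)[OF k] ne[symmetric] r0d zr0])
        with T0[OF k] show False by simp
      qed
      have Tk: "(\<Sum>r<d. (cmod (z k r))^2) - 1/2 * ((cmod (z k p))^2 + (cmod (z k p))^2) = 0"
        using T0[OF k] unfolding T_def pq_eq p_def[symmetric] .
      have zk0: "\<forall>r<d. r \<noteq> p \<longrightarrow> z k r = 0"
        by (rule Tzero[OF pd Tk])
      have zkp: "z k p \<noteq> 0"
      proof
        assume "z k p = 0"
        with zk0 have "\<forall>r<d. z k r = 0" by blast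
        with r0d zr0 show False by blast
      qed
      have pq_eq': "k mod d = p" using pq_eq p_def by simp
      let ?f = "\<lambda>k. if k mod d = k div d then z k (k div d) else 0"
      have fk: "?f k = z k p" using pq_eq' p_def by simp
      have "S = ?f k + (\<Sum>k'\<in>{..<n}-{k}. ?f k')"
        unfolding S_def' using k by (subst sum.remove[of _ k]) auto
      then have "0 = z k p + (\<Sum>k'\<in>{..<n}-{k}. ?f k')" using S0 fk by simp
      then have nz': "(\<Sum>k'\<in>{..<n}-{k}. ?f k') \<noteq> 0" using zkp by auto
      have "\<exists>k'\<in>{..<n}-{k}. ?f k' \<noteq> 0"
      proof (rule ccontr)
        assume "\<not> ?thesis"
        then have "(\<Sum>k'\<in>{..<n}-{k}. ?f k') = 0" by (intro sum.neutral) blast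
        with nz' show False by simp
      qed
      then obtain k' where k': "k' \<in> {..<n}-{k}" "?f k' \<noteq> 0" by blast
      define p' where "p' = k' div d"
      have k'n: "k' < n" and kk: "k' \<noteq> k" using k' by auto
      have k'dd: "k' mod d = k' div d" using k'(2) by (auto split: if_splits)
      then have k'd: "k' mod d = p'" using p'_def by simp
      have zk'p: "z k' p' \<noteq> 0" using k'(2) k'dd unfolding p'_def by simp
      have p'd: "p' < d" using pq[OF k'n] p'_def by simp
      have zk'0: "\<forall>r<d. r \<noteq> p' \<longrightarrow> z k' r = 0"
      proof -
        have Tk': "(\<Sum>r<d. (cmod (z k' r))^2) - 1/2 * ((cmod (z k' p'))^2 + (cmod (z k' p'))^2) = 0"
          using T0[OF k'n] unfolding T_def k'dd p'_def[symmetric] .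
        show ?thesis by (rule Tzero[OF p'd Tk'])
      qed
      have pp: "p \<noteq> p'"
      proof
        assume "p = p'"
        have e1: "k = p * d + p" using div_mult_mod_eq[of k d] pq_eq' p_def by simp
        have e2: "k' = p' * d + p'" using div_mult_mod_eq[of k' d] k'd p'_def by simp
        from e1 e2 \<open>p = p'\<close> have "k = k'" by simp
        with kk show False by simp
      qed
      have "\<exists>r::nat. r < 3 \<and> r \<noteq> p \<and> r \<noteq> p'"
      proof (cases "p \<noteq> 0 \<and> p' \<noteq> 0")
        case True then show ?thesis by (intro exI[of _ 0]) simp
      next
        case F1: False
        show ?thesis
        proof (cases "p \<noteq> 1 \<and> p' \<noteq> 1")
          case True then show ?thesis by (intro exI[of _ 1]) simp
        next
          case False with F1 pp have "p \<noteq> 2 \<and> p' \<noteq> 2" by auto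
          then show ?thesis by (intro exI[of _ 2]) simp
        qed
      qed
      then obtain r where r: "r < 3" "r \<noteq> p" "r \<noteq> p'" by blast
      have rd: "r < d" using r d3 by simp
      have "gg X Y 0 r = 0 \<and> gg X Y 1 r = 0"
      proof (rule ALG)
        show "gg X Y 0 p * v $ k + gg X Y 1 p * v $ (n+k) \<noteq> 0" using zkp unfolding z_def zf_def n_def .
        have "z k p' = 0" using zk0 p'd pp by blast
        then show "gg X Y 0 p' * v $ k + gg X Y 1 p' * v $ (n+k) = 0" unfolding z_def zf_def n_def .
        have "z k r = 0" using zk0 rd r by blast
        then show "gg X Y 0 r * v $ k + gg X Y 1 r * v $ (n+k) = 0" unfolding z_def zf_def n_def .
        have "z k' p = 0" using zk'0 pd pp by blast
        then show "gg X Y 0 p * v $ k' + gg X Y 1 p * v $ (n+k') = 0" unfolding z_def zf_def n_def .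
        show "gg X Y 0 p' * v $ k' + gg X Y 1 p' * v $ (n+k') \<noteq> 0" using zk'p unfolding z_def zf_def n_def .
        have "z k' r = 0" using zk'0 rd r by blast
        then show "gg X Y 0 r * v $ k' + gg X Y 1 r * v $ (n+k') = 0" unfolding z_def zf_def n_def .
      qed
      then have "X $$ (r,r) = 0" "Y $$ (r,r) = 0" by (auto simp: gg_def gm_def)
      from detz[OF ctx rd this] g show False unfolding generic_pair_def by blast
    qed
  qed
qed


end
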